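(* In the linear setting described in the context, let $\mathbf P_t^s$ be defined by $\mathbf P_t^0=\mathbf P_t$ and $\mathbf P_t^{s+1}=\boldsymbol\theta_{t-s-1}^{-1}\mathbf P_t^s\boldsymbol\theta_{t-s-1}$ ($0\le s<t\le T$). Then for each $0\le s\le T$, $$\|\mathbf P_s^s-\mathbf P_0\|_2\le\big(1+\kappa(\overline{\boldsymbol\theta}_s)^2\big)\,\|\mathbf I-\overline{\boldsymbol\theta}_s^T\overline{\boldsymbol\theta}_s\|_2,$$ where $\overline{\boldsymbol\theta}_0=\mathbf I$ and $\overline{\boldsymbol\theta}_s=\boldsymbol\theta_{s-1}\cdots\boldsymbol\theta_0$ for $s\ge1$.
   Context: Linear setting: fix integers $1\le r\le d$ and $T\ge1$. For $t=0,\dots,T$, $Z^t\subset\mathbb{R}^d$ is an $r$-dimensional linear subspace and $\mathbf P_t$ is the orthogonal projection onto $Z^t$. For $t=0,\dots,T-1$, $\boldsymbol\theta_t\in\mathbb{R}^{d\times d}$ is invertible with $\boldsymbol\theta_tZ^t=Z^{t+1}$. $\|\cdot\|_2$ is the spectral norm and $\kappa(\mathbf A)=\|\mathbf A\|_2\|\mathbf A^{-1}\|_2$. *)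

theory Defs
  imports "HOL-Analysis.Analysis"
begin

definition spec_norm :: "real^'n^'m \<Rightarrow> real" where
  "spec_norm A = onorm (\<lambda>x. A *v x)"

definition cond_num :: "real^'n^'n \<Rightarrow> real" where
  "cond_num A = spec_norm A * spec_norm (matrix_inv A)"

definition is_orth_proj :: "real^'n^'n \<Rightarrow> (real^'n) set \<Rightarrow> bool" where
  "is_orth_proj P Z \<longleftrightarrow> (\<forall>x. P *v x \<in> Z \<and> (\<forall>z\<in>Z. (x - P *v x) \<bullet> z = 0))"

fun Pts :: "(nat \<Rightarrow> real^'n^'n) \<Rightarrow> (nat \<Rightarrow> real^'n^'n) \<Rightarrow> nat \<Rightarrow> nat \<Rightarrow> real^'n^'n" where
  "Pts \<theta> P t 0 = P t"
| "Pts \<theta> P t (Suc s) = matrix_inv (\<theta> (t - s - 1)) ** Pts \<theta> P t s ** \<theta> (t - s - 1)"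

fun thetabar :: "(nat \<Rightarrow> real^'n^'n) \<Rightarrow> nat \<Rightarrow> real^'n^'n" where
  "thetabar \<theta> 0 = mat 1"
| "thetabar \<theta> (Suc s) = \<theta> s ** thetabar \<theta> s"

end

theory Submission
  imports Defs
begin

lemma minv:
  fixes A :: "real^'n^'n"
  assumes "invertible A"
  shows "A ** matrix_inv A = mat 1" "matrix_inv A ** A = mat 1"
proof -
  have "\<exists>A'. A ** A' = mat 1 \<and> A' ** A = mat 1" using assms unfolding invertible_def by auto
  hence "A ** matrix_inv A = mat 1 \<and> matrix_inv A ** A = mat 1"
    unfolding matrix_inv_def by (rule someI_ex)
  thus "A ** matrix_inv A = mat 1" "matrix_inv A ** A = mat 1" by auto
qed

lemma minv_unique:
  fixes A C :: "real^'n^'n"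
  assumes "invertible A" "C ** A = mat 1"
  shows "matrix_inv A = C"
proof -
  have "C = C ** (A ** matrix_inv A)" using minv(1)[OF assms(1)] by simp
  also have "\<dots> = (C ** A) ** matrix_inv A" by (simp add: matrix_mul_assoc)
  also have "\<dots> = matrix_inv A" using assms(2) by simp
  finally show ?thesis by simp
qed

lemma minv_mult:
  fixes A B :: "real^'n^'n"
  assumes "invertible A" "invertible B"
  shows "matrix_inv (A ** B) = matrix_inv B ** matrix_inv A"
proof (rule minv_unique)
  show "invertible (A ** B)" using assms by (rule invertible_mult)
  have "matrix_inv B ** matrix_inv A ** (A ** B) = matrix_inv B ** (matrix_inv A ** A) ** B"
    by (simp add: matrix_mul_assoc)
  also have "\<dots> = mat 1" using minv[OF assms(1)] minv[OF assms(2)] by simp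
  finally show "matrix_inv B ** matrix_inv A ** (A ** B) = mat 1" .
qed

lemma thetabar_shift:
  "thetabar (\<lambda>i. \<theta> (a + i)) (Suc k) = thetabar (\<lambda>i. \<theta> (Suc a + i)) k ** \<theta> a"
proof (induction k)
  case 0 then show ?case by simp
next
  case (Suc k)
  have "thetabar (\<lambda>i. \<theta> (a + i)) (Suc (Suc k)) = \<theta> (a + Suc k) ** thetabar (\<lambda>i. \<theta> (a + i)) (Suc k)" by simp
  also have "\<dots> = \<theta> (a + Suc k) ** (thetabar (\<lambda>i. \<theta> (Suc a + i)) k ** \<theta> a)" using Suc by simp
  also have "\<dots> = thetabar (\<lambda>i. \<theta> (Suc a + i)) (Suc k) ** \<theta> a" by (simp add: matrix_mul_assoc)
  finally show ?case .
qed

lemma thetabar_inv: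
  fixes \<theta> :: "nat \<Rightarrow> real^'n^'n"
  shows "(\<And>i. i < k \<Longrightarrow> invertible (\<theta> i)) \<Longrightarrow> invertible (thetabar \<theta> k)"
proof (induction k)
  case 0 then show ?case by (simp add: invertible_def) 
next
  case (Suc k) then show ?case by (simp add: invertible_mult)
qed

lemma Pts_eq:
  fixes \<theta> P :: "nat \<Rightarrow> real^'n^'n"
  assumes "\<And>i. i < t \<Longrightarrow> invertible (\<theta> i)"
  shows "k \<le> t \<Longrightarrow> Pts \<theta> P t k = matrix_inv (thetabar (\<lambda>i. \<theta> (t - k + i)) k) ** P t ** thetabar (\<lambda>i. \<theta> (t - k + i)) k"
proof (induction k)
  case 0
  have "matrix_inv (mat 1 :: real^'n^'n) = mat 1" by (rule minv_unique) (auto simp: invertible_def)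
  then show ?case by simp
next
  case (Suc k)
  define a where "a = t - Suc k"
  have ta: "t - k = Suc a" using Suc.prems unfolding a_def by simp
  have ia: "invertible (\<theta> a)" using assms Suc.prems unfolding a_def by simp
  define G where "G = thetabar (\<lambda>i. \<theta> (Suc a + i)) k"
  have iG: "invertible G" unfolding G_def by (rule thetabar_inv) (use assms Suc.prems ta in auto)
  have "Pts \<theta> P t (Suc k) = matrix_inv (\<theta> a) ** (matrix_inv G ** P t ** G) ** \<theta> a"
    using Suc ta unfolding a_def G_def by (simp add: diff_diff_add)
  also have "\<dots> = matrix_inv (G ** \<theta> a) ** P t ** (G ** \<theta> a)"
    using minv_mult[OF iG ia] by (simp add: matrix_mul_assoc)
  also have "G ** \<theta> a = thetabar (\<lambda>i. \<theta> (t - Suc k + i)) (Suc k)"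
    unfolding G_def a_def by (rule thetabar_shift[symmetric])
  finally show ?case .
qed
lemma sn_bound: "norm (A *v x) \<le> spec_norm A * norm x"
  unfolding spec_norm_def by (rule onorm[OF matrix_vector_mul_bounded_linear])

lemma sn_nonneg: "0 \<le> spec_norm A"
  unfolding spec_norm_def by (rule onorm_pos_le[OF matrix_vector_mul_bounded_linear])

lemma sn_le: "(\<And>x. norm (A *v x) \<le> b * norm x) \<Longrightarrow> spec_norm A \<le> b"
  unfolding spec_norm_def by (rule onorm_le)

lemma op_in: "is_orth_proj P Z \<Longrightarrow> P *v x \<in> Z"
  unfolding is_orth_proj_def by auto

lemma op_orth: "is_orth_proj P Z \<Longrightarrow> z \<in> Z \<Longrightarrow> (x - P *v x) \<bullet> z = 0"
  unfolding is_orth_proj_def by auto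

lemma op_fix:
  assumes "is_orth_proj P Z" "subspace Z" "z \<in> Z"
  shows "P *v z = z"
proof -
  have "z - P *v z \<in> Z" using assms op_in by (metis subspace_diff)
  hence "(z - P *v z) \<bullet> (z - P *v z) = 0" using op_orth[OF assms(1)] by blast
  thus ?thesis by simp
qed

lemma op_norm:
  assumes "is_orth_proj P Z"
  shows "norm (P *v x) \<le> norm x" "norm (x - P *v x) \<le> norm x"
    "norm (P *v x) ^ 2 = x \<bullet> (P *v x)"
proof -
  have o: "(x - P *v x) \<bullet> (P *v x) = 0" using op_orth[OF assms op_in[OF assms]] .
  have "norm x ^ 2 = norm (P *v x) ^ 2 + norm (x - P *v x) ^ 2"
    using norm_add_Pythagorean[of "x - P *v x" "P *v x"] o by (simp add: add.commute orthogonal_def)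
  thus "norm (P *v x) \<le> norm x" "norm (x - P *v x) \<le> norm x"
    by (simp_all add: power2_le_imp_le)
  show "norm (P *v x) ^ 2 = x \<bullet> (P *v x)" using o
    by (simp add: inner_diff_left power2_norm_eq_inner)
qed

lemma inner_transp: "(A *v v) \<bullet> (w :: real^'n) = v \<bullet> (transpose A *v w)"
  by (metis dot_lmul_matrix inner_commute transpose_matrix_vector)

lemma core:
  fixes Th P0 Ps :: "real^'n^'n" and Z0 Zs :: "(real^'n) set"
  assumes inv: "invertible Th" and sZs: "subspace Zs"
    and p0: "is_orth_proj P0 Z0" and ps: "is_orth_proj Ps Zs"
    and img: "(\<lambda>x. Th *v x) ` Z0 = Zs"
  defines "J \<equiv> matrix_inv Th" and "N \<equiv> spec_norm Th" and "M \<equiv> spec_norm (matrix_inv Th)"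
    and "E \<equiv> mat 1 - transpose Th ** Th" and "e \<equiv> spec_norm (mat 1 - transpose Th ** Th)"
    and "L \<equiv> spec_norm (matrix_inv Th ** Ps ** Th - P0)"
  shows "L \<le> N*M" "L \<le> M^2*e" "M^2*(1-e) \<le> 1" "1 - N^2 \<le> e"
proof -
  have JT: "J *v (Th *v y) = y" for y
    using minv(2)[OF inv] unfolding J_def by (simp add: matrix_vector_mul_assoc)
  have TJ: "Th *v (J *v y) = y" for y
    using minv(1)[OF inv] unfolding J_def by (simp add: matrix_vector_mul_assoc)
  have M0: "0 \<le> M" and N0: "0 \<le> N" and e0: "0 \<le> e" unfolding M_def N_def e_def by (rule sn_nonneg)+
  have Eid: "E *v x = x - transpose Th *v (Th *v x)" for x
    unfolding E_def by (simp add: matrix_vector_mult_diff_rdistrib matrix_vector_mul_assoc)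
  have key: "x \<bullet> (E *v x) = (norm x)^2 - (norm (Th *v x))^2" for x
    by (simp add: Eid inner_diff_right power2_norm_eq_inner inner_transp)
  have CS: "x \<bullet> (E *v x) \<le> e * (norm x)^2" for x
  proof -
    have "x \<bullet> (E *v x) \<le> norm x * norm (E *v x)" by (rule Cauchy_Schwarz_ineq2[THEN abs_le_D1])
    also have "\<dots> \<le> norm x * (e * norm x)" unfolding e_def E_def by (simp add: mult_left_mono sn_bound)
    finally show ?thesis by (simp add: power2_eq_square algebra_simps)
  qed
  show "1 - N^2 \<le> e"
  proof -
    obtain i :: 'n where True by auto
    define u :: "real^'n" where "u = axis i 1"
    have nu: "norm u = 1" unfolding u_def by simp
    have "norm (Th *v u) \<le> N" using sn_bound[of Th u] nu unfolding N_def by simp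
    hence "(norm (Th *v u))^2 \<le> N^2" by (simp add: power_mono)
    moreover have "u \<bullet> (E *v u) \<le> e" using CS[of u] nu by simp
    ultimately show ?thesis using key[of u] nu by simp
  qed
  show "M^2*(1-e) \<le> 1"
  proof (cases "e < 1")
    case False
    then show ?thesis using M0 by (smt (verit) mult_nonneg_nonpos zero_le_power2)
  next
    case True
    define c where "c = 1 / sqrt (1 - e)"
    have c0: "c > 0" unfolding c_def using True by simp
    have c2: "c^2 = 1/(1-e)" unfolding c_def using True by (simp add: power_divide)
    have "norm (J *v y) \<le> c * norm y" for y
    proof -
      have "(norm (J *v y))^2 - (norm y)^2 \<le> e * (norm (J *v y))^2"
        using key[of "J *v y"] CS[of "J *v y"] TJ by simp
      hence "(1-e) * (norm (J *v y))^2 \<le> (norm y)^2" by (simp add: algebra_simps)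
      hence "(norm (J *v y))^2 \<le> (norm y)^2 / (1-e)" using True by (simp add: field_simps)
      also have "\<dots> = (c * norm y)^2" using c2 by (simp add: power_mult_distrib)
      finally have "(norm (J *v y))^2 \<le> (c * norm y)^2" .
      moreover have "0 \<le> c * norm y" using c0 by simp
      ultimately show ?thesis by (rule power2_le_imp_le)
    qed
    hence "M \<le> c" unfolding M_def J_def by (rule sn_le)
    hence "M^2 \<le> c^2" using M0 by (simp add: power_mono)
    thus ?thesis using c2 True by (simp add: field_simps)
  qed
  have decomp: "(matrix_inv Th ** Ps ** Th - P0) *v x = J *v (Ps *v (Th *v (x - P0 *v x)))" for x
  proof -
    have inz: "Th *v (P0 *v x) \<in> Zs" using img op_in[OF p0] by blast
    have "Ps *v (Th *v (x - P0 *v x)) = Ps *v (Th *v x) - Th *v (P0 *v x)"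
      using op_fix[OF ps sZs inz] by (simp add: matrix_vector_mult_diff_distrib)
    hence "J *v (Ps *v (Th *v (x - P0 *v x))) = J *v (Ps *v (Th *v x)) - P0 *v x"
      using JT by (simp add: matrix_vector_mult_diff_distrib)
    thus ?thesis unfolding J_def by (simp add: matrix_vector_mult_diff_rdistrib matrix_vector_mul_assoc matrix_mul_assoc)
  qed
  show "L \<le> N*M" unfolding L_def
  proof (rule sn_le)
    fix x
    define v where "v = x - P0 *v x"
    have "norm (J *v (Ps *v (Th *v v))) \<le> M * norm (Ps *v (Th *v v))"
      using sn_bound unfolding M_def J_def by blast
    also have "\<dots> \<le> M * norm (Th *v v)" using op_norm(1)[OF ps] M0 by (simp add: mult_left_mono)
    also have "\<dots> \<le> M * (N * norm v)" unfolding N_def by (rule mult_left_mono[OF sn_bound M0])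
    also have "\<dots> \<le> M * (N * norm x)" using op_norm(2)[OF p0] M0 N0 unfolding v_def
      by (simp add: mult_left_mono)
    finally have "norm (J *v (Ps *v (Th *v v))) \<le> N * M * norm x" by (simp add: algebra_simps)
    thus "norm ((matrix_inv Th ** Ps ** Th - P0) *v x) \<le> N * M * norm x"
      unfolding decomp v_def .
  qed
  show "L \<le> M^2*e" unfolding L_def
  proof (rule sn_le)
    fix x
    define v where "v = x - P0 *v x"
    define p where "p = Ps *v (Th *v v)"
    have "p \<in> Zs" unfolding p_def by (rule op_in[OF ps])
    then obtain w where w: "w \<in> Z0" "p = Th *v w" using img by blast
    have Jp: "J *v p = w" using w JT by simp
    have nw: "norm w \<le> M * norm p" using Jp sn_bound unfolding M_def J_def by metis
    have vw: "v \<bullet> w = 0" unfolding v_def by (rule op_orth[OF p0 w(1)])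
    have "(norm p)^2 = (Th *v v) \<bullet> p" unfolding p_def using op_norm(3)[OF ps] by simp
    also have "\<dots> = v \<bullet> (transpose Th *v (Th *v w))" using w inner_transp by metis
    also have "\<dots> = - (v \<bullet> (E *v w))" using vw by (simp add: Eid inner_diff_right)
    also have "\<dots> \<le> norm v * norm (E *v w)"
      using Cauchy_Schwarz_ineq2[of v "E *v w"] by linarith
    also have "\<dots> \<le> norm v * (e * norm w)" unfolding e_def E_def by (simp add: mult_left_mono sn_bound)
    also have "\<dots> \<le> norm v * (e * (M * norm p))" using nw e0 by (simp add: mult_left_mono)
    finally have pp: "(norm p)^2 \<le> (e * M * norm v) * norm p" by (simp add: algebra_simps)
    have np: "norm p \<le> e * M * norm v"
    proof (cases "norm p = 0")
      case True then show ?thesis using e0 M0 by simp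
    next
      case False
      hence "norm p > 0" by simp
      thus ?thesis using pp by (simp add: power2_eq_square)
    qed
    have "norm (J *v p) \<le> M * norm p" using sn_bound unfolding M_def J_def by blast
    also have "\<dots> \<le> M * (e * M * norm v)" using np M0 by (simp add: mult_left_mono)
    also have "\<dots> \<le> M * (e * M * norm x)" using op_norm(2)[OF p0] M0 e0 unfolding v_def
      by (simp add: mult_left_mono)
    finally have "norm (J *v p) \<le> M^2 * e * norm x" by (simp add: algebra_simps power2_eq_square)
    thus "norm ((matrix_inv Th ** Ps ** Th - P0) *v x) \<le> M^2 * e * norm x"
      unfolding decomp v_def p_def .
  qed
qed

lemma scal:
  fixes L N M e :: real
  assumes "0 \<le> N" "0 \<le> M" "0 \<le> e" "L \<le> N*M" "L \<le> M^2*e" "M^2*(1-e) \<le> 1" "1 - N^2 \<le> e"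
  shows "L \<le> (1 + (N*M)^2) * e"
proof (cases "M^2 \<le> 1 + (N*M)^2")
  case True
  have "M^2*e \<le> (1 + (N*M)^2) * e" using True assms(3) by (rule mult_right_mono)
  then show ?thesis using assms(5) by linarith
next
  case False
  define t where "t = (N*M)^2"
  have t0: "0 \<le> t" unfolding t_def by simp
  have Mt: "M^2 > 1 + t" using False t_def by simp
  have "M^2 * (1 - N^2) > 1" using Mt unfolding t_def by (simp add: power_mult_distrib algebra_simps)
  hence h1: "(1+t)*e \<ge> 1"
  proof -
    assume a: "M^2 * (1 - N^2) > 1"
    have "N^2 * (M^2*(1-N^2)) \<ge> N^2" using mult_left_mono[of 1 "M^2*(1-N^2)" "N^2"] a by simp
    hence "(1+t)*(1-N^2) \<ge> 1" unfolding t_def by (simp add: power_mult_distrib algebra_simps)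
    moreover have "1 - N^2 \<ge> 0" using a by (smt (verit) mult_nonneg_nonpos zero_le_power2)
    ultimately show ?thesis using assms(7) t0 by (smt (verit) mult_left_mono)
  qed
  have "M^2*e \<ge> M^2 - 1" using assms(6) by (simp add: algebra_simps)
  hence "M^2*e > t" using Mt by linarith
  have h2: "(1+t)*e \<ge> t"
  proof -
    have "M^2 * ((1+t)*e) \<ge> M^2 * t"
    proof -
      have "M^2*((1+t)*e) = (1+t)*(M^2*e)" by (simp add: algebra_simps)
      also have "\<dots> \<ge> (1+t)*(M^2 - 1)" using \<open>M^2*e \<ge> M^2 - 1\<close> t0 by (simp add: mult_left_mono)
      finally have "M^2*((1+t)*e) \<ge> (1+t)*(M^2-1)" .
      moreover have "(1+t)*(M^2-1) - M^2*t = M^2 - 1 - t" by (simp add: algebra_simps)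
      ultimately show ?thesis using Mt by linarith
    qed
    moreover have "M^2 > 0" using Mt t0 by linarith
    ultimately show ?thesis by (meson mult_le_cancel_left_pos)
  qed
  have "N*M \<le> max 1 t"
  proof (cases "N*M \<le> 1")
    case True then show ?thesis by simp
  next
    case False
    hence "N*M \<le> (N*M)^2" using mult_left_mono[of 1 "N*M" "N*M"] by (simp add: power2_eq_square)
    then show ?thesis unfolding t_def by simp
  qed
  hence "L \<le> (1+t)*e" using h1 h2 assms(4) by (simp add: max_def split: if_splits)
  then show ?thesis unfolding t_def .
qed

lemma img_thetabar:
  fixes Z :: "nat \<Rightarrow> (real^'d) set" and \<theta> :: "nat \<Rightarrow> real^'d^'d"
  assumes "\<And>t. t < T \<Longrightarrow> (\<lambda>x. \<theta> t *v x) ` Z t = Z (Suc t)"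
  shows "k \<le> T \<Longrightarrow> (\<lambda>x. thetabar \<theta> k *v x) ` Z 0 = Z k"
proof (induction k)
  case 0 then show ?case by simp
next
  case (Suc k)
  have "(\<lambda>x. thetabar \<theta> (Suc k) *v x) ` Z 0 = (\<lambda>x. \<theta> k *v x) ` ((\<lambda>x. thetabar \<theta> k *v x) ` Z 0)"
    by (auto simp: matrix_vector_mul_assoc image_iff)
  also have "\<dots> = Z (Suc k)" using Suc assms by simp
  finally show ?case .
qed

theorem mainTheorem7:
  fixes Z :: "nat \<Rightarrow> (real^'d) set"
    and P :: "nat \<Rightarrow> real^'d^'d"
    and \<theta> :: "nat \<Rightarrow> real^'d^'d"
    and r T :: nat
  assumes "1 \<le> r" and "r \<le> CARD('d)" and "1 \<le> T"
    and "\<And>t. t \<le> T \<Longrightarrow> subspace (Z t) \<and> dim (Z t) = r"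
    and "\<And>t. t \<le> T \<Longrightarrow> is_orth_proj (P t) (Z t)"
    and "\<And>t. t < T \<Longrightarrow> invertible (\<theta> t)"
    and "\<And>t. t < T \<Longrightarrow> (\<lambda>x. \<theta> t *v x) ` Z t = Z (Suc t)"
    and "s \<le> T"
  shows "spec_norm (Pts \<theta> P s s - P 0)
           \<le> (1 + (cond_num (thetabar \<theta> s))\<^sup>2)
             * spec_norm (mat 1 - transpose (thetabar \<theta> s) ** thetabar \<theta> s)"
proof -
  have invi: "\<And>i. i < s \<Longrightarrow> invertible (\<theta> i)" using assms(6,8) by simp
  have "Pts \<theta> P s s = matrix_inv (thetabar (\<lambda>i. \<theta> (s - s + i)) s) ** P s ** thetabar (\<lambda>i. \<theta> (s - s + i)) s"
    by (rule Pts_eq[OF invi order_refl])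
  hence Peq: "Pts \<theta> P s s = matrix_inv (thetabar \<theta> s) ** P s ** thetabar \<theta> s" by simp
  have inv: "invertible (thetabar \<theta> s)" by (rule thetabar_inv[OF invi])
  have img: "(\<lambda>x. thetabar \<theta> s *v x) ` Z 0 = Z s" by (rule img_thetabar[where Z=Z and \<theta>=\<theta> and T=T, OF assms(7) assms(8)])
  note c = core[OF inv _ assms(5)[of 0] assms(5)[of s] img]
  have sub: "subspace (Z s)" using assms(4,8) by simp
  show ?thesis unfolding Peq cond_num_def
    by (rule scal[OF sn_nonneg sn_nonneg sn_nonneg c[OF sub]]) (use assms in auto)
qed

end
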